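(* Let $A$ be a linear Nakayama algebra with $n$ simple modules, with vertices labelled $1,\dots,n$ so that the arrows are exactly $i\to i+1$ for $1\le i<n$. Then the Coxeter permutation of $A$ (with respect to this labelling) coincides with Ringel's homological permutation $\hat h$ of $A$.
   Context: A linear Nakayama algebra is $A=KQ/I$, $K$ a field, $Q$ the quiver $1\to 2\to\cdots\to n$ and $I$ an admissible ideal; it has finite global dimension. Modules are finitely generated right modules; $S(i)$, $P(i)$, $I(i)$ denote the simple, indecomposable projective and indecomposable injective modules at vertex $i$. The Cartan matrix $\phi_A$ has entries $\phi_{i,j}=\dim_K e_jAe_i$; the Coxeter matrix is $C_A=-\phi_A^T\phi_A^{-1}$. A Bruhat decomposition of an invertible matrix $M$ is $M=U_1PU_2$ with $U_1,U_2$ invertible upper triangular and $P$ a permutation matrix (uniquely determined). The Coxeter permutation is $p_c$ with $p_c(i)=j$ if the nonzero entry in column $i$ of $P$ (from $C_A=U_1PU_2$) lies in row $j$. Ringel's homological bijection: for a simple module $S$ with injective envelope $I(S)$, let $e(S)=\min\{\operatorname{pd} S,\operatorname{pd} I(S)\}$, let $NS=I(S)$ if $e(S)$ is even and $NS=S$ if $e(S)$ is odd, and set $h(S)=\operatorname{top}\Omega^{e(S)}(NS)$ (top of the $e(S)$-th syzygy). The homological permutation $\hat h$ of $\{1,\dots,n\}$ is defined by $\hat h(i)=j$ iff $h(S(i))\cong S(j)$. *)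

theory Defs
  imports "Jordan_Normal_Form.Matrix" "HOL-Combinatorics.Permutations"
begin

(* A linear Nakayama algebra A = KQ/I, Q = 1 -> 2 -> ... -> n, I admissible, is determined
   up to isomorphism by its Kupisch series c, where c i = dim_K P(i) = length of the
   indecomposable projective right module P(i) = e_i A.  With paths composed left to right,
   P(i) is uniserial with composition factors S(i), S(i+1), ..., S(i + c i - 1) (top S(i)).
   Admissibility of I means exactly: c n = 1, c i >= 2 for i < n, c (i+1) >= c i - 1. *)
definition linear_nakayama :: "nat \<Rightarrow> (nat \<Rightarrow> nat) \<Rightarrow> bool" where
  "linear_nakayama n c \<longleftrightarrow> 1 \<le> n \<and> c n = 1 \<and>
     (\<forall>i. 1 \<le> i \<and> i < n \<longrightarrow> 2 \<le> c i \<and> c i \<le> c (i + 1) + 1)"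

(* Indecomposable modules of A are the uniserial (interval) modules:
   the pair (a, b) with a \<le> b \<le> a + c a - 1 denotes the module P(a)/rad^(b-a+1) P(a),
   with composition factors S(a), ..., S(b), top S(a) and socle S(b).
   The zero module is represented by None. *)
type_synonym imod = "nat \<times> nat"

definition proj_end :: "(nat \<Rightarrow> nat) \<Rightarrow> nat \<Rightarrow> nat" where
  "proj_end c a = a + c a - 1"

definition simple_mod :: "nat \<Rightarrow> imod" where
  "simple_mod i = (i, i)"

definition top_vertex :: "imod \<Rightarrow> nat" where
  "top_vertex M = fst M"

(* injective envelope I(S(i)) = I(i): the uniserial module with socle S(i) of maximal length,
   i.e. (a, i) with a the least vertex such that S(i) is a composition factor of P(a) *)
definition inj_env_simple :: "(nat \<Rightarrow> nat) \<Rightarrow> nat \<Rightarrow> imod" where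
  "inj_env_simple c i = ((LEAST a. 1 \<le> a \<and> a \<le> i \<and> i \<le> proj_end c a), i)"

(* first syzygy: kernel of the projective cover P(a) -> (a, b) *)
definition syz :: "(nat \<Rightarrow> nat) \<Rightarrow> imod option \<Rightarrow> imod option" where
  "syz c M = (case M of None \<Rightarrow> None
      | Some (a, b) \<Rightarrow> (if b < proj_end c a then Some (b + 1, proj_end c a) else None))"

definition syzygy :: "(nat \<Rightarrow> nat) \<Rightarrow> nat \<Rightarrow> imod option \<Rightarrow> imod option" where
  "syzygy c k M = (syz c ^^ k) M"

definition proj_dim :: "(nat \<Rightarrow> nat) \<Rightarrow> imod \<Rightarrow> nat" where
  "proj_dim c M = (LEAST k. syzygy c (Suc k) (Some M) = None)"

definition e_val :: "(nat \<Rightarrow> nat) \<Rightarrow> nat \<Rightarrow> nat" where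
  "e_val c i = min (proj_dim c (simple_mod i)) (proj_dim c (inj_env_simple c i))"

definition N_mod :: "(nat \<Rightarrow> nat) \<Rightarrow> nat \<Rightarrow> imod" where
  "N_mod c i = (if even (e_val c i) then inj_env_simple c i else simple_mod i)"

(* h(S(i)) = top of Omega^{e(S(i))}(N S(i)); hhat i = j iff h(S(i)) = S(j) *)
definition hom_perm :: "nat \<Rightarrow> (nat \<Rightarrow> nat) \<Rightarrow> nat \<Rightarrow> nat" where
  "hom_perm n c i = (if 1 \<le> i \<and> i \<le> n
      then top_vertex (the (syzygy c (e_val c i) (Some (N_mod c i)))) else i)"

(* Matrices: vertex k (1 \<le> k \<le> n) corresponds to matrix index k - 1. *)

(* Cartan matrix: phi_{i,j} = dim_K e_j A e_i = multiplicity of S(i) in P(j) *)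
definition cartan :: "nat \<Rightarrow> (nat \<Rightarrow> nat) \<Rightarrow> rat mat" where
  "cartan n c = mat n n (\<lambda>(r, s). let i = r + 1; j = s + 1 in
      if j \<le> i \<and> i \<le> proj_end c j then 1 else 0)"

definition mat_inv :: "nat \<Rightarrow> rat mat \<Rightarrow> rat mat" where
  "mat_inv n M = (THE B. B \<in> carrier_mat n n \<and> inverts_mat M B \<and> inverts_mat B M)"

definition coxeter :: "nat \<Rightarrow> (nat \<Rightarrow> nat) \<Rightarrow> rat mat" where
  "coxeter n c = - (transpose_mat (cartan n c) * mat_inv n (cartan n c))"

definition perm_matrix :: "nat \<Rightarrow> (nat \<Rightarrow> nat) \<Rightarrow> rat mat" where
  "perm_matrix n p = mat n n (\<lambda>(r, s). if r + 1 = p (s + 1) then 1 else 0)"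

definition bruhat_perm :: "nat \<Rightarrow> rat mat \<Rightarrow> (nat \<Rightarrow> nat) \<Rightarrow> bool" where
  "bruhat_perm n M p \<longleftrightarrow> p permutes {1..n} \<and>
     (\<exists>U1 U2. U1 \<in> carrier_mat n n \<and> U2 \<in> carrier_mat n n \<and>
        upper_triangular U1 \<and> upper_triangular U2 \<and> invertible_mat U1 \<and> invertible_mat U2 \<and>
        M = U1 * perm_matrix n p * U2)"

definition coxeter_perm :: "nat \<Rightarrow> (nat \<Rightarrow> nat) \<Rightarrow> nat \<Rightarrow> nat" where
  "coxeter_perm n c = (THE p. bruhat_perm n (coxeter n c) p)"

end

theory Submission
  imports Defs "Jordan_Normal_Form.Determinant"
begin

locale lnak =
  fixes n :: nat and c :: "nat \<Rightarrow> nat"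
  assumes LN: "linear_nakayama n c"
begin

lemma n_ge1: "1 \<le> n" using LN unfolding linear_nakayama_def by auto
lemma c_n: "c n = 1" using LN unfolding linear_nakayama_def by auto
lemma c_i: "1 \<le> i \<Longrightarrow> i < n \<Longrightarrow> 2 \<le> c i \<and> c i \<le> c (i + 1) + 1"
  using LN unfolding linear_nakayama_def by auto

abbreviation pe where "pe \<equiv> proj_end c"

lemma pe_step: "1 \<le> i \<Longrightarrow> i < n \<Longrightarrow> pe i \<le> pe (Suc i)"
  using c_i[of i] unfolding proj_end_def by auto

lemma pe_mono: "1 \<le> i \<Longrightarrow> i \<le> k \<Longrightarrow> k \<le> n \<Longrightarrow> pe i \<le> pe k"
proof (induction k)
  case 0 then show ?case by simp
next
  case (Suc k)
  show ?case
  proof (cases "i = Suc k")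
    case True then show ?thesis by simp
  next
    case False
    then have "i \<le> k" using Suc by simp
    then have "pe i \<le> pe k" using Suc by simp
    also have "\<dots> \<le> pe (Suc k)" using pe_step[of k] Suc \<open>i \<le> k\<close> by simp
    finally show ?thesis .
  qed
qed

lemma pe_n: "pe n = n" using c_n unfolding proj_end_def by simp

lemma pe_le_n: "1 \<le> i \<Longrightarrow> i \<le> n \<Longrightarrow> pe i \<le> n"
  using pe_mono[of i n] pe_n by simp

lemma pe_ge: "1 \<le> i \<Longrightarrow> i \<le> n \<Longrightarrow> i \<le> pe i"
proof (cases "i = n")
  case True then show ?thesis using pe_n by simp
next
  case False
  assume "1 \<le> i" "i \<le> n"
  then show ?thesis using c_i[of i] False unfolding proj_end_def by auto
qed

definition F :: "nat \<Rightarrow> nat" where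
  "F u = (if u = 0 then 0 else if u \<le> n then pe u + 1 else n + 1)"

lemma F_mono: "u \<le> v \<Longrightarrow> F u \<le> F v"
  unfolding F_def using pe_mono[of u v] pe_le_n[of u] by auto

lemma F_gt: "1 \<le> u \<Longrightarrow> u \<le> n \<Longrightarrow> u < F u"
  unfolding F_def using pe_ge[of u] by auto

lemma F_le: "F u \<le> n + 1"
  unfolding F_def using pe_le_n[of u] by auto

lemma F_ge1: "1 \<le> u \<Longrightarrow> 1 \<le> F u"
  unfolding F_def by auto

lemma F_pe: "1 \<le> u \<Longrightarrow> u \<le> n \<Longrightarrow> F u = pe u + 1"
  unfolding F_def by auto

lemma Fpow_mono: "u \<le> v \<Longrightarrow> (F ^^ i) u \<le> (F ^^ i) v"
  by (induction i) (auto intro: F_mono)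

lemma Fpow_ge1: "1 \<le> u \<Longrightarrow> 1 \<le> (F ^^ i) u"
proof (induction i)
  case (Suc i) then show ?case using F_ge1[of "(F ^^ i) u"] by simp
qed simp

lemma Fpow_le: "u \<le> n + 1 \<Longrightarrow> (F ^^ i) u \<le> n + 1"
proof (induction i)
  case (Suc i) then show ?case using F_le[of "(F ^^ i) u"] by simp
qed simp

definition zz :: "nat \<Rightarrow> nat \<Rightarrow> nat \<Rightarrow> nat" where
  "zz x y k = (if even k then (F ^^ (k div 2)) x else (F ^^ (k div 2)) y)"

lemma zz_even: "zz x y (2 * i) = (F ^^ i) x" unfolding zz_def by simp
lemma zz_odd: "zz x y (Suc (2 * i)) = (F ^^ i) y" unfolding zz_def by simp
lemma zz_0: "zz x y 0 = x" unfolding zz_def by simp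
lemma zz_1: "zz x y (Suc 0) = y" unfolding zz_def by simp
lemma zz_SS: "zz x y (Suc (Suc k)) = F (zz x y k)"
  unfolding zz_def by (cases "even k") auto

definition valid :: "nat \<Rightarrow> nat \<Rightarrow> bool" where
  "valid x y \<longleftrightarrow> 1 \<le> x \<and> x < y \<and> x \<le> n \<and> y \<le> F x"

lemma zz_mono1:
  assumes "valid x y" shows "zz x y k \<le> zz x y (Suc k)"
proof (cases "even k")
  case True
  then obtain i where k: "k = 2 * i" by (auto elim: evenE)
  have "(F ^^ i) x \<le> (F ^^ i) y" using assms unfolding valid_def by (auto intro: Fpow_mono)
  then show ?thesis using k by (simp add: zz_even zz_odd)
next
  case False
  then obtain i where k: "k = Suc (2 * i)" by (auto elim: oddE)
  have "(F ^^ i) y \<le> (F ^^ i) (F x)" using assms unfolding valid_def by (auto intro: Fpow_mono)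
  also have "\<dots> = (F ^^ Suc i) x" by (simp add: funpow_Suc_right del: funpow.simps)
  finally show ?thesis using k zz_even[of x y "Suc i"] zz_odd[of x y i] by simp
qed

lemma zz_mono:
  assumes "valid x y" "k \<le> k'" shows "zz x y k \<le> zz x y k'"
  using assms(2)
proof (induction k')
  case 0 then show ?case by simp
next
  case (Suc k')
  then show ?case using zz_mono1[OF assms(1), of k'] by (cases "k = Suc k'") auto
qed

lemma zz_le: assumes "valid x y" shows "zz x y k \<le> n + 1"
proof (cases "even k")
  case True then show ?thesis using assms Fpow_le[of x "k div 2"] unfolding zz_def valid_def by auto
next
  case False
  have "y \<le> n + 1" using assms F_le[of x] unfolding valid_def by auto
  then show ?thesis using False Fpow_le[of y "k div 2"] unfolding zz_def by auto
qed

lemma zz_ge1: assumes "valid x y" shows "1 \<le> zz x y k"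
  using assms Fpow_ge1[of x "k div 2"] Fpow_ge1[of y "k div 2"] unfolding zz_def valid_def by auto

definition PD :: "nat \<Rightarrow> nat \<Rightarrow> nat" where
  "PD x y = (LEAST k. zz x y (Suc k) = zz x y (Suc (Suc k)))"

lemma PD_ex:
  assumes "valid x y" shows "\<exists>k. zz x y (Suc k) = zz x y (Suc (Suc k))"
proof (rule ccontr)
  assume "\<not> ?thesis"
  then have lt: "zz x y (Suc k) < zz x y (Suc (Suc k))" for k
    using zz_mono1[OF assms, of "Suc k"] by (metis le_neq_implies_less)
  have "k + 1 \<le> zz x y (Suc k)" for k
  proof (induction k)
    case 0 then show ?case using zz_ge1[OF assms] by simp
  next
    case (Suc k) then show ?case using lt[of k] by simp
  qed
  from this[of "n + 1"] zz_le[OF assms, of "Suc (n+1)"] show False by simp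
qed

lemma PD_eq: assumes "valid x y" shows "zz x y (Suc (PD x y)) = zz x y (Suc (Suc (PD x y)))"
  unfolding PD_def using LeastI_ex[OF PD_ex[OF assms]] .

lemma PD_lt: assumes "valid x y" "k < PD x y" shows "zz x y (Suc k) < zz x y (Suc (Suc k))"
  using not_less_Least[of k "\<lambda>k. zz x y (Suc k) = zz x y (Suc (Suc k))"] assms zz_mono1[OF assms(1), of "Suc k"]
  unfolding PD_def by simp

lemma zz_strict1: assumes "valid x y" "k \<le> PD x y" shows "zz x y k < zz x y (Suc k)"
proof (cases k)
  case 0 then show ?thesis using assms unfolding valid_def by (simp add: zz_0 zz_1)
next
  case (Suc k') then show ?thesis using PD_lt[OF assms(1), of k'] assms by simp
qed

lemma zz_strict: assumes "valid x y" "i < k" "k \<le> Suc (PD x y)" shows "zz x y i < zz x y k"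
  using assms(2,3)
proof (induction k)
  case 0 then show ?case by simp
next
  case (Suc k)
  have a: "zz x y k < zz x y (Suc k)" using zz_strict1[OF assms(1), of k] Suc by simp
  show ?case
  proof (cases "i = k")
    case True then show ?thesis using a by simp
  next
    case False then show ?thesis using Suc a by simp
  qed
qed

lemma zz_le_n: assumes "valid x y" "k \<le> PD x y" shows "zz x y k \<le> n"
  using zz_strict1[OF assms] zz_le[OF assms(1), of "Suc k"] by simp

definition T :: "nat \<Rightarrow> nat \<Rightarrow> nat" where "T x y = zz x y (PD x y)"

lemma T_le_n: "valid x y \<Longrightarrow> T x y \<le> n" unfolding T_def by (rule zz_le_n) auto
lemma T_ge: "valid x y \<Longrightarrow> x \<le> T x y" unfolding T_def using zz_mono[of x y 0] by (simp add: zz_0)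

lemma syzygy_Suc: "syzygy c (Suc k) M = syz c (syzygy c k M)"
  unfolding syzygy_def by simp

lemma syzygy_zz:
  assumes "valid x y"
  shows "syzygy c k (Some (x, y - 1)) = (if k \<le> PD x y then Some (zz x y k, zz x y (Suc k) - 1) else None)"
proof (induction k)
  case 0 then show ?case by (simp add: syzygy_def zz_0 zz_1)
next
  case (Suc k)
  show ?case
  proof (cases "k \<le> PD x y")
    case True
    let ?a = "zz x y k" and ?b = "zz x y (Suc k) - 1"
    have a1: "1 \<le> ?a" "?a \<le> n" using zz_ge1[OF assms] zz_le_n[OF assms True] by auto
    have pe: "pe ?a = zz x y (Suc (Suc k)) - 1" using F_pe[OF a1] zz_SS[of x y k] by simp
    have g1: "1 \<le> zz x y (Suc k)" using zz_ge1[OF assms] by simp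
    have "syzygy c (Suc k) (Some (x, y - 1)) = syz c (Some (?a, ?b))"
      using Suc True by (simp add: syzygy_Suc)
    also have "\<dots> = (if ?b < pe ?a then Some (?b + 1, pe ?a) else None)"
      unfolding syz_def by simp
    also have "\<dots> = (if Suc k \<le> PD x y then Some (zz x y (Suc k), zz x y (Suc (Suc k)) - 1) else None)"
    proof (cases "k < PD x y")
      case True
      then have "zz x y (Suc k) < zz x y (Suc (Suc k))" using PD_lt[OF assms] by simp
      then show ?thesis using True pe g1 by auto
    next
      case False
      then have "k = PD x y" using \<open>k \<le> PD x y\<close> by simp
      then have "zz x y (Suc k) = zz x y (Suc (Suc k))" using PD_eq[OF assms] by simp
      then show ?thesis using False pe by auto
    qed
    finally show ?thesis .
  next
    case False
    then show ?thesis using Suc by (simp add: syzygy_Suc syz_def)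
  qed
qed

lemma proj_dim_zz:
  assumes "valid x y" shows "proj_dim c (x, y - 1) = PD x y"
proof -
  have "proj_dim c (x, y - 1) = (LEAST k. PD x y \<le> k)"
    unfolding proj_dim_def syzygy_zz[OF assms] by (simp add: not_less_eq_eq)
  also have "\<dots> = PD x y" by (rule Least_equality) auto
  finally show ?thesis .
qed

lemma top_syzygy_PD:
  assumes "valid x y" shows "top_vertex (the (syzygy c (PD x y) (Some (x, y - 1)))) = T x y"
  unfolding syzygy_zz[OF assms] T_def top_vertex_def by simp

end

context lnak begin

definition aj :: "nat \<Rightarrow> nat" where "aj j = fst (inj_env_simple c j)"

lemma inj_env_eq: "inj_env_simple c j = (aj j, j)"
  unfolding aj_def inj_env_simple_def by simp

lemma aj_props:
  assumes "1 \<le> j" "j \<le> n"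
  shows "1 \<le> aj j" "aj j \<le> j" "j \<le> pe (aj j)"
proof -
  have ex: "1 \<le> j \<and> j \<le> j \<and> j \<le> pe j" using assms pe_ge[of j] by simp
  have "1 \<le> aj j \<and> aj j \<le> j \<and> j \<le> pe (aj j)"
    unfolding aj_def inj_env_simple_def fst_conv by (rule LeastI[of _ j], rule ex)
  then show "1 \<le> aj j" "aj j \<le> j" "j \<le> pe (aj j)" by auto
qed

lemma aj_min:
  assumes "1 \<le> j" "j \<le> n" "1 \<le> x" "x < aj j"
  shows "pe x < j"
proof -
  have "\<not> (1 \<le> x \<and> x \<le> j \<and> j \<le> pe x)"
    using not_less_Least[of x "\<lambda>a. 1 \<le> a \<and> a \<le> j \<and> j \<le> pe a"] assms(4)
    unfolding aj_def inj_env_simple_def fst_conv by blast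
  then show ?thesis using assms aj_props[OF assms(1,2)] by auto
qed

lemma valid_mid:
  assumes "1 \<le> j" "j \<le> n" "aj j \<le> x" "x \<le> j"
  shows "valid x (Suc j)"
proof -
  have "pe (aj j) \<le> pe x" using pe_mono[of "aj j" x] aj_props[OF assms(1,2)] assms by simp
  then have "j \<le> pe x" using aj_props[OF assms(1,2)] by simp
  moreover have "F x = pe x + 1" using F_pe[of x] aj_props[OF assms(1,2)] assms by simp
  ultimately show ?thesis unfolding valid_def using aj_props[OF assms(1,2)] assms by simp
qed

lemma zz_SS_even: "zz x y (Suc (Suc (2 * i))) = (F ^^ Suc i) x"
  using zz_even[of x y "Suc i"] by simp
lemma zz_SSS_odd: "zz x y (Suc (Suc (Suc (2 * i)))) = (F ^^ Suc i) y"
  using zz_odd[of x y "Suc i"] by simp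

lemma E_even_down:
  assumes "valid x y" "valid x' y" "x \<le> x'"
    and "zz x' y (Suc (2 * i)) = zz x' y (Suc (Suc (2 * i)))"
  shows "zz x y (Suc (2 * i)) = zz x y (Suc (Suc (2 * i)))"
proof -
  have "zz x y (Suc (Suc (2 * i))) \<le> zz x' y (Suc (Suc (2 * i)))"
    unfolding zz_SS_even by (rule Fpow_mono) fact
  also have "\<dots> = zz x y (Suc (2 * i))" using assms(4) by (simp add: zz_odd)
  finally show ?thesis using zz_mono1[OF assms(1), of "Suc (2 * i)"] by simp
qed

lemma E_odd_up:
  assumes "valid x y" "valid x' y" "x \<le> x'"
    and "zz x y (Suc (Suc (2 * i))) = zz x y (Suc (Suc (Suc (2 * i))))"
  shows "zz x' y (Suc (Suc (2 * i))) = zz x' y (Suc (Suc (Suc (2 * i))))"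
proof -
  have "zz x y (Suc (Suc (2 * i))) \<le> zz x' y (Suc (Suc (2 * i)))"
    unfolding zz_SS_even by (rule Fpow_mono) fact
  moreover have "zz x' y (Suc (Suc (2 * i))) \<le> zz x' y (Suc (Suc (Suc (2 * i))))"
    by (rule zz_mono1) fact
  moreover have "zz x' y (Suc (Suc (Suc (2 * i)))) = zz x y (Suc (Suc (Suc (2 * i))))"
    by (simp add: zz_SSS_odd)
  ultimately show ?thesis using assms(4) by simp
qed

lemma PD_le: "zz x y (Suc k) = zz x y (Suc (Suc k)) \<Longrightarrow> PD x y \<le> k"
  unfolding PD_def by (rule Least_le)

definition h0 :: "nat \<Rightarrow> nat" where
  "h0 j = (if even (min (PD j (Suc j)) (PD (aj j) (Suc j))) then T (aj j) (Suc j) else T j (Suc j))"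

lemma h0_main:
  assumes "1 \<le> j" "j \<le> n"
  defines "A \<equiv> aj j" and "y \<equiv> Suc j"
  defines "m \<equiv> min (PD j y) (PD A y)"
  shows "(even m \<longrightarrow> PD A y = m \<and> T A y \<le> T j y) \<and> (odd m \<longrightarrow> PD j y = m \<and> T j y \<le> T A y)"
proof -
  have vA: "valid A y" unfolding A_def y_def by (rule valid_mid) (use assms aj_props[OF assms(1,2)] in auto)
  have vj: "valid j y" unfolding y_def by (rule valid_mid) (use assms aj_props[OF assms(1,2)] in auto)
  have Aj: "A \<le> j" unfolding A_def using aj_props[OF assms(1,2)] by simp
  show ?thesis
  proof (rule conjI[OF impI impI])
    assume ev: "even m"
    then obtain i where i: "m = 2 * i" by (auto elim: evenE)
    show "PD A y = m \<and> T A y \<le> T j y"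
    proof (cases "PD A y \<le> PD j y")
      case True
      then have pa: "PD A y = 2 * i" using i unfolding m_def by simp
      have "T A y = (F ^^ i) A" unfolding T_def pa zz_even ..
      also have "\<dots> \<le> (F ^^ i) j" by (rule Fpow_mono) fact
      also have "\<dots> = zz j y (2 * i)" by (simp add: zz_even)
      also have "\<dots> \<le> T j y" unfolding T_def by (rule zz_mono[OF vj]) (use True pa in simp)
      finally show ?thesis using pa i by simp
    next
      case False
      then have pj: "PD j y = 2 * i" using i unfolding m_def by simp
      have "zz j y (Suc (2 * i)) = zz j y (Suc (Suc (2 * i)))" using PD_eq[OF vj] pj by simp
      then have "zz A y (Suc (2 * i)) = zz A y (Suc (Suc (2 * i)))" by (rule E_even_down[OF vA vj Aj])
      then have "PD A y \<le> 2 * i" by (rule PD_le)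
      then show ?thesis using False pj by simp
    qed
  next
    assume od: "odd m"
    then obtain i where i: "m = Suc (2 * i)" by (auto elim: oddE)
    show "PD j y = m \<and> T j y \<le> T A y"
    proof (cases "PD j y \<le> PD A y")
      case True
      then have pj: "PD j y = Suc (2 * i)" using i unfolding m_def by simp
      have "T j y = zz A y (Suc (2 * i))" unfolding T_def pj by (simp add: zz_odd)
      also have "\<dots> \<le> T A y" unfolding T_def by (rule zz_mono[OF vA]) (use True pj in simp)
      finally show ?thesis using pj i by simp
    next
      case False
      then have pa: "PD A y = Suc (2 * i)" using i unfolding m_def by simp
      have "zz A y (Suc (Suc (2 * i))) = zz A y (Suc (Suc (Suc (2 * i))))" using PD_eq[OF vA] pa by simp
      then have "zz j y (Suc (Suc (2 * i))) = zz j y (Suc (Suc (Suc (2 * i))))" by (rule E_odd_up[OF vA vj Aj])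
      then have "PD j y \<le> Suc (2 * i)" by (rule PD_le)
      then show ?thesis using False pa by simp
    qed
  qed
qed

lemma hom_perm_h0:
  assumes "1 \<le> j" "j \<le> n"
  shows "hom_perm n c j = h0 j"
proof -
  define A where "A = aj j"
  define y where "y = Suc j"
  have vA: "valid A y" unfolding A_def y_def by (rule valid_mid) (use assms aj_props[OF assms(1,2)] in auto)
  have vj: "valid j y" unfolding y_def by (rule valid_mid) (use assms aj_props[OF assms(1,2)] in auto)
  have e: "e_val c j = min (PD j y) (PD A y)"
    unfolding e_val_def inj_env_eq simple_mod_def
    using proj_dim_zz[OF vA] proj_dim_zz[OF vj] unfolding A_def y_def by simp
  note M = h0_main[OF assms, folded A_def y_def]
  show ?thesis
  proof (cases "even (e_val c j)")
    case True
    have "N_mod c j = (A, y - 1)" unfolding N_mod_def inj_env_eq A_def y_def using True by simp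
    moreover have "e_val c j = PD A y" using M True e by simp
    ultimately have "hom_perm n c j = T A y"
      unfolding hom_perm_def using assms top_syzygy_PD[OF vA] by simp
    then show ?thesis unfolding h0_def using True e A_def y_def by simp
  next
    case False
    have "N_mod c j = (j, y - 1)" unfolding N_mod_def simple_mod_def y_def using False by simp
    moreover have "e_val c j = PD j y" using M False e by simp
    ultimately have "hom_perm n c j = T j y"
      unfolding hom_perm_def using assms top_syzygy_PD[OF vj] by simp
    then show ?thesis unfolding h0_def using False e A_def y_def by simp
  qed
qed

lemma h0_le:
  assumes "1 \<le> j" "j \<le> n"
  shows "h0 j \<le> T (aj j) (Suc j)" "h0 j \<le> T j (Suc j)"
  using h0_main[OF assms] unfolding h0_def by (auto split: if_splits)

lemma h0_QC:
  assumes "1 \<le> j" "j \<le> n" "aj j \<le> x" "x \<le> j"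
  shows "h0 j \<le> T x (Suc j)"
proof -
  define A where "A = aj j"
  define y where "y = Suc j"
  have vA: "valid A y" unfolding A_def y_def by (rule valid_mid) (use assms aj_props[OF assms(1,2)] in auto)
  have vj: "valid j y" unfolding y_def by (rule valid_mid) (use assms aj_props[OF assms(1,2)] in auto)
  have vx: "valid x y" unfolding y_def by (rule valid_mid) (use assms in auto)
  show ?thesis
  proof (cases "even (PD x y)")
    case True
    then obtain i where i: "PD x y = 2 * i" by (auto elim: evenE)
    have eqx: "zz x y (Suc (2 * i)) = zz x y (Suc (Suc (2 * i)))" using PD_eq[OF vx] i by simp
    have "zz A y (Suc (2 * i)) = zz A y (Suc (Suc (2 * i)))"
      using E_even_down[OF vA vx _ eqx] assms A_def by simp
    then have le: "PD A y \<le> 2 * i" by (rule PD_le)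
    have "T A y \<le> zz A y (2 * i)" unfolding T_def by (rule zz_mono[OF vA le])
    also have "\<dots> = (F ^^ i) A" by (simp add: zz_even)
    also have "\<dots> \<le> (F ^^ i) x" by (rule Fpow_mono) (use assms A_def in simp)
    also have "\<dots> = T x y" unfolding T_def i by (simp add: zz_even)
    finally show ?thesis using h0_le[OF assms(1,2)] A_def y_def by simp
  next
    case False
    then obtain i where i: "PD x y = Suc (2 * i)" by (auto elim: oddE)
    have eqx: "zz x y (Suc (Suc (2 * i))) = zz x y (Suc (Suc (Suc (2 * i))))" using PD_eq[OF vx] i by simp
    have "zz j y (Suc (Suc (2 * i))) = zz j y (Suc (Suc (Suc (2 * i))))"
      using E_odd_up[OF vx vj _ eqx] assms by simp
    then have le: "PD j y \<le> Suc (2 * i)" by (rule PD_le)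
    have "T j y \<le> zz j y (Suc (2 * i))" unfolding T_def by (rule zz_mono[OF vj le])
    also have "\<dots> = T x y" unfolding T_def i by (simp add: zz_odd)
    finally show ?thesis using h0_le[OF assms(1,2)] A_def y_def by simp
  qed
qed

end

context lnak begin

function R :: "nat \<Rightarrow> nat \<Rightarrow> nat" where
  "R t x = (if t \<le> x \<or> F x \<le> x then x else R t (F x))"
  by auto
termination by (relation "measure (\<lambda>(t, x). t - x)") auto

declare R.simps[simp del]

lemma R_ge: "x \<le> R t x"
proof (induction t x rule: R.induct)
  case (1 t x)
  show ?case
  proof (cases "t \<le> x \<or> F x \<le> x")
    case True then show ?thesis by (subst R.simps) simp
  next
    case False
    then have "F x \<le> R t (F x)" using 1 by simp
    then show ?thesis using False by (subst R.simps) simp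
  qed
qed

lemma R_stop: "t \<le> x \<Longrightarrow> R t x = x" by (subst R.simps) simp

lemma R_step: "x < t \<Longrightarrow> x < F x \<Longrightarrow> R t x = R t (F x)" by (subst R.simps) simp

lemma R_orbit:
  assumes v: "valid x y" and t: "t \<le> T x y"
  shows "q \<le> Suc (PD x y) \<Longrightarrow> \<exists>q'. q \<le> q' \<and> q' \<le> Suc (PD x y) \<and> even q' = even q \<and> R t (zz x y q) = zz x y q'"
proof (induction "Suc (PD x y) - q" arbitrary: q rule: less_induct)
  case less
  show ?case
  proof (cases "t \<le> zz x y q")
    case True then show ?thesis using R_stop less.prems by auto
  next
    case False
    have "q < PD x y"
    proof (rule ccontr)
      assume "\<not> q < PD x y"
      then have "zz x y (PD x y) \<le> zz x y q" using zz_mono[OF v] by simp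
      then show False using False t unfolding T_def by simp
    qed
    then have qn: "zz x y q \<le> n" using zz_le_n[OF v] by simp
    have "zz x y q < F (zz x y q)" by (rule F_gt) (use zz_ge1[OF v] qn in auto)
    then have "R t (zz x y q) = R t (zz x y (Suc (Suc q)))"
      using R_step[of "zz x y q" t] False by (simp add: zz_SS)
    moreover have "\<exists>q'. Suc (Suc q) \<le> q' \<and> q' \<le> Suc (PD x y) \<and> even q' = even (Suc (Suc q)) \<and>
        R t (zz x y (Suc (Suc q))) = zz x y q'"
      by (rule less.hyps) (use \<open>q < PD x y\<close> in auto)
    then obtain q' where "Suc (Suc q) \<le> q' \<and> q' \<le> Suc (PD x y) \<and> even q' = even (Suc (Suc q)) \<and>
        R t (zz x y (Suc (Suc q))) = zz x y q'" by blast
    ultimately have "q \<le> q' \<and> q' \<le> Suc (PD x y) \<and> even q' = even q \<and> R t (zz x y q) = zz x y q'" by auto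
    then show ?thesis by blast
  qed
qed

lemma R_sep:
  assumes v: "valid x y" and t: "t \<le> T x y"
  shows "R t x \<noteq> R t y"
proof
  assume eq: "R t x = R t y"
  obtain q0 where q0: "q0 \<le> Suc (PD x y)" "even q0" "R t (zz x y 0) = zz x y q0"
    using R_orbit[OF v t, of 0] by auto
  obtain q1 where q1: "q1 \<le> Suc (PD x y)" "odd q1" "R t (zz x y (Suc 0)) = zz x y q1"
    using R_orbit[OF v t, of "Suc 0"] by auto
  have "zz x y q0 = zz x y q1" using eq q0 q1 by (simp add: zz_0 zz_1)
  moreover have "q0 \<noteq> q1" using q0 q1 by auto
  ultimately show False
    using zz_strict[OF v, of q0 q1] zz_strict[OF v, of q1 q0] q0 q1 by (cases "q0 < q1") auto
qed

lemma T_ge1: "valid x y \<Longrightarrow> 1 \<le> T x y" using T_ge[of x y] unfolding valid_def by simp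

lemma h0_range: assumes "1 \<le> j" "j \<le> n" shows "1 \<le> h0 j" "h0 j \<le> n"
proof -
  have vA: "valid (aj j) (Suc j)" by (rule valid_mid) (use assms aj_props[OF assms] in auto)
  have vj: "valid j (Suc j)" by (rule valid_mid) (use assms aj_props[OF assms] in auto)
  show "1 \<le> h0 j" "h0 j \<le> n" unfolding h0_def using T_ge1[OF vA] T_ge1[OF vj] T_le_n[OF vA] T_le_n[OF vj] by auto
qed

lemma fact5:
  assumes "1 \<le> j" "j \<le> n"
  shows "1 \<le> x \<Longrightarrow> x \<le> j \<Longrightarrow> R (h0 j) x \<noteq> R (h0 j) (Suc j)"
proof (induction "j - x" arbitrary: x rule: less_induct)
  case less
  show ?case
  proof (cases "aj j \<le> x")
    case True
    have vx: "valid x (Suc j)" by (rule valid_mid) (use assms True less.prems in auto)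
    show ?thesis by (rule R_sep[OF vx h0_QC[OF assms True less.prems(2)]])
  next
    case False
    have pex: "pe x < j" by (rule aj_min) (use assms less.prems False in auto)
    show ?thesis
    proof (cases "h0 j \<le> x")
      case True
      then have "R (h0 j) x = x" by (rule R_stop)
      moreover have "Suc j \<le> R (h0 j) (Suc j)" by (rule R_ge)
      ultimately show ?thesis using less.prems by simp
    next
      case False
      have Fx: "F x = pe x + 1" using F_pe[of x] less.prems assms by simp
      have "x < F x" by (rule F_gt) (use less.prems assms in auto)
      then have "R (h0 j) x = R (h0 j) (F x)" using R_step False by simp
      moreover have "R (h0 j) (F x) \<noteq> R (h0 j) (Suc j)"
        using less.hyps[of "F x"] Fx pex \<open>x < F x\<close> less.prems by auto
      ultimately show ?thesis by simp
    qed
  qed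
qed

end

lemma telescope_alt:
  fixes g :: "nat \<Rightarrow> rat"
  shows "(\<Sum>k\<le>p. (-1)^k * (g k + g (Suc k))) = g 0 + (-1)^p * g (Suc p)"
  by (induction p) (auto simp: algebra_simps)

context lnak begin

definition alt :: "nat \<Rightarrow> nat \<Rightarrow> nat \<Rightarrow> rat" where
  "alt x y s = (\<Sum>k\<le>PD x y. (-1)^k * (if zz x y k = s then 1 else 0))"

definition Phi :: "nat \<Rightarrow> nat \<Rightarrow> rat" where
  "Phi v s = (if s \<le> v \<and> v \<le> pe s then 1 else 0)"

lemma fact1:
  assumes v: "valid x y"
  shows "(\<Sum>s=1..n. Phi w s * alt x y s) = (if x \<le> w \<and> w < y then 1 else 0)"
proof -
  define g where "g k = (if zz x y k \<le> w \<and> w < zz x y (Suc k) then 1 else (0::rat))" for k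
  have inner: "(\<Sum>s=1..n. Phi w s * ((-1)^k * (if zz x y k = s then 1 else 0))) = (-1)^k * Phi w (zz x y k)"
    if k: "k \<le> PD x y" for k
  proof -
    have r: "zz x y k \<in> {1..n}" using zz_ge1[OF v] zz_le_n[OF v k] by auto
    have "(\<Sum>s=1..n. Phi w s * ((-1)^k * (if zz x y k = s then 1 else 0))) =
          (\<Sum>s=1..n. (if s = zz x y k then Phi w (zz x y k) * (-1)^k else 0))"
      by (rule sum.cong) auto
    also have "\<dots> = Phi w (zz x y k) * (-1)^k" using r by simp
    finally show ?thesis by simp
  qed
  have phig: "Phi w (zz x y k) = g k + g (Suc k)" if k: "k \<le> PD x y" for k
  proof -
    have a1: "1 \<le> zz x y k" "zz x y k \<le> n" using zz_ge1[OF v] zz_le_n[OF v k] by auto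
    have pe: "pe (zz x y k) = zz x y (Suc (Suc k)) - 1" using F_pe[OF a1] zz_SS[of x y k] by simp
    have m1: "zz x y k \<le> zz x y (Suc k)" "zz x y (Suc k) \<le> zz x y (Suc (Suc k))"
      using zz_mono1[OF v] by auto
    have g1: "1 \<le> zz x y (Suc (Suc k))" using zz_ge1[OF v] by simp
    show ?thesis unfolding Phi_def g_def pe using m1 g1 by auto
  qed
  have "(\<Sum>s=1..n. Phi w s * alt x y s) = (\<Sum>s=1..n. \<Sum>k\<le>PD x y. Phi w s * ((-1)^k * (if zz x y k = s then 1 else 0)))"
    unfolding alt_def by (simp add: sum_distrib_left)
  also have "\<dots> = (\<Sum>k\<le>PD x y. \<Sum>s=1..n. Phi w s * ((-1)^k * (if zz x y k = s then 1 else 0)))"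
    by (rule sum.swap)
  also have "\<dots> = (\<Sum>k\<le>PD x y. (-1)^k * (g k + g (Suc k)))"
    by (rule sum.cong[OF refl]) (metis atMost_iff inner phig)
  also have "\<dots> = g 0 + (-1)^(PD x y) * g (Suc (PD x y))" by (rule telescope_alt)
  also have "g (Suc (PD x y)) = 0" unfolding g_def using PD_eq[OF v] by simp
  finally show ?thesis unfolding g_def by (simp add: zz_0 zz_1)
qed

lemma alt_zero:
  assumes v: "valid x y" and s: "T x y < s"
  shows "alt x y s = 0"
  unfolding alt_def
proof (rule sum.neutral, intro ballI)
  fix k assume "k \<in> {..PD x y}"
  then have "zz x y k \<le> T x y" unfolding T_def using zz_mono[OF v] by simp
  then show "(-1)^k * (if zz x y k = s then 1 else 0) = (0::rat)" using s by simp
qed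

lemma alt_T:
  assumes v: "valid x y"
  shows "alt x y (T x y) = (-1)^(PD x y)"
proof -
  have "alt x y (T x y) = (\<Sum>k\<le>PD x y. (if k = PD x y then (-1)^k else 0))"
    unfolding alt_def T_def
  proof (rule sum.cong)
    fix k assume k: "k \<in> {..PD x y}"
    show "(-1)^k * (if zz x y k = zz x y (PD x y) then 1 else 0) = (if k = PD x y then (-1)^k else (0::rat))"
    proof (cases "k = PD x y")
      case False
      then have "zz x y k < zz x y (PD x y)" using zz_strict[OF v, of k "PD x y"] k by simp
      then show ?thesis using False by simp
    qed simp
  qed simp
  also have "\<dots> = (-1)^(PD x y)" by simp
  finally show ?thesis .
qed

lemma alt_T_nz: "valid x y \<Longrightarrow> alt x y (T x y) \<noteq> 0"
  using alt_T[of x y] by simp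

definition xs :: "nat \<Rightarrow> nat" where "xs j = fst (N_mod c j)"

lemma N_mod_eq: "N_mod c j = (xs j, j)"
  unfolding xs_def N_mod_def inj_env_eq simple_mod_def by simp

lemma e_val_eq:
  assumes "1 \<le> j" "j \<le> n"
  shows "e_val c j = min (PD j (Suc j)) (PD (aj j) (Suc j))"
proof -
  have vA: "valid (aj j) (Suc j)" by (rule valid_mid) (use assms aj_props[OF assms] in auto)
  have vj: "valid j (Suc j)" by (rule valid_mid) (use assms aj_props[OF assms] in auto)
  show ?thesis unfolding e_val_def inj_env_eq simple_mod_def
    using proj_dim_zz[OF vA] proj_dim_zz[OF vj] by simp
qed

lemma xs_props:
  assumes "1 \<le> j" "j \<le> n"
  shows "valid (xs j) (Suc j)" "h0 j = T (xs j) (Suc j)" "xs j \<le> j" "1 \<le> xs j"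
proof -
  have vA: "valid (aj j) (Suc j)" by (rule valid_mid) (use assms aj_props[OF assms] in auto)
  have vj: "valid j (Suc j)" by (rule valid_mid) (use assms aj_props[OF assms] in auto)
  have x: "xs j = (if even (min (PD j (Suc j)) (PD (aj j) (Suc j))) then aj j else j)"
    unfolding xs_def N_mod_def e_val_eq[OF assms] inj_env_eq simple_mod_def by simp
  show "valid (xs j) (Suc j)" "h0 j = T (xs j) (Suc j)" "xs j \<le> j" "1 \<le> xs j"
    using vA vj aj_props[OF assms] assms unfolding x h0_def by auto
qed

definition uu :: "nat \<Rightarrow> nat \<Rightarrow> rat" where "uu j s = alt (xs j) (Suc j) s"
definition chi :: "nat \<Rightarrow> nat \<Rightarrow> rat" where "chi j v = (if xs j \<le> v \<and> v \<le> j then 1 else 0)"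

lemma fact1_j:
  assumes "1 \<le> j" "j \<le> n"
  shows "(\<Sum>s=1..n. Phi w s * uu j s) = chi j w"
  unfolding uu_def chi_def fact1[OF xs_props(1)[OF assms]] by auto

lemma uu_zero: "1 \<le> j \<Longrightarrow> j \<le> n \<Longrightarrow> h0 j < s \<Longrightarrow> uu j s = 0"
  unfolding uu_def using alt_zero xs_props by simp

lemma uu_nz: "1 \<le> j \<Longrightarrow> j \<le> n \<Longrightarrow> uu j (h0 j) \<noteq> 0"
  unfolding uu_def using alt_T_nz xs_props by simp

lemma h0_inj:
  assumes i1: "1 \<le> i" and ij: "i < j" and jn: "j \<le> n" and eq: "h0 i = h0 j"
  shows False
proof -
  have j1: "1 \<le> j" using i1 ij by simp
  have iN: "i \<le> n" using ij jn by simp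
  define t where "t = h0 j"
  have t1: "1 \<le> t" "t \<le> n" unfolding t_def using h0_range[OF j1 jn] by auto
  define Dm where "Dm v = (R t v = R t (Suc j))" for v
  define eta where "eta v = (if Dm (Suc v) then 1 else 0) - (if Dm v then 1 else (0::rat))" for v
  define eP where "eP s = (\<Sum>v=1..n. eta v * Phi v s)" for s
  have L1: "eP s = (if Dm (Suc (pe s)) then 1 else 0) - (if Dm s then 1 else 0)" if s: "1 \<le> s" "s \<le> n" for s
  proof -
    have sub: "{s..pe s} \<subseteq> {1..n}" using s pe_le_n[OF s] by auto
    have "eP s = (\<Sum>v=s..pe s. eta v)"
      unfolding eP_def by (rule sum.mono_neutral_cong_right) (use sub in \<open>auto simp: Phi_def\<close>)
    also have "\<dots> = (\<Sum>v=s..pe s. (if Dm (Suc v) then 1 else 0) - (if Dm v then 1 else (0::rat)))"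
      unfolding eta_def ..
    also have "\<dots> = (if Dm (Suc (pe s)) then 1 else 0) - (if Dm s then 1 else 0)"
      by (rule sum_Suc_diff[where f = "\<lambda>v. if Dm v then 1 else (0::rat)"]) (use pe_ge[OF s] in simp)
    finally show ?thesis .
  qed
  have L2: "eP s = 0" if s: "1 \<le> s" "s < t" for s
  proof -
    have sn: "s \<le> n" using s t1 by simp
    have "s < F s" by (rule F_gt) (use s sn in auto)
    then have "R t s = R t (F s)" using R_step s by simp
    then have "Dm (Suc (pe s)) = Dm s" unfolding Dm_def using F_pe[of s] s sn by simp
    then show ?thesis using L1[of s] s sn by simp
  qed
  have L3: "(\<Sum>v=1..n. eta v * chi k v) = uu k t * eP t" if k: "1 \<le> k" "k \<le> n" "h0 k = t" for k
  proof -
    have "(\<Sum>v=1..n. eta v * chi k v) = (\<Sum>v=1..n. eta v * (\<Sum>s=1..n. Phi v s * uu k s))"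
      using fact1_j[OF k(1,2)] by simp
    also have "\<dots> = (\<Sum>v=1..n. \<Sum>s=1..n. uu k s * (eta v * Phi v s))"
      by (simp add: sum_distrib_left mult.commute mult.left_commute)
    also have "\<dots> = (\<Sum>s=1..n. \<Sum>v=1..n. uu k s * (eta v * Phi v s))" by (rule sum.swap)
    also have "\<dots> = (\<Sum>s=1..n. uu k s * eP s)" unfolding eP_def by (simp add: sum_distrib_left)
    also have "\<dots> = (\<Sum>s\<in>{t}. uu k s * eP s)"
    proof (rule sum.mono_neutral_cong_right)
      show "\<forall>s\<in>{1..n} - {t}. uu k s * eP s = 0"
      proof
        fix s assume s: "s \<in> {1..n} - {t}"
        show "uu k s * eP s = 0"
        proof (cases "s < t")
          case True then show ?thesis using L2[of s] s by simp
        next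
          case False then have "t < s" using s by auto
          then show ?thesis using uu_zero[OF k(1,2)] k(3) by simp
        qed
      qed
    qed (use t1 in auto)
    finally show ?thesis by simp
  qed
  have Dj: "\<not> Dm v" if "1 \<le> v" "v \<le> j" for v
    unfolding Dm_def t_def using fact5[OF j1 jn that] by simp
  have eta0: "eta v = 0" if "1 \<le> v" "v < j" for v
    unfolding eta_def using Dj[of v] Dj[of "Suc v"] that by simp
  have etaj: "eta j = 1" unfolding eta_def using Dj[of j] j1 by (simp add: Dm_def)
  have LHSi: "(\<Sum>v=1..n. eta v * chi i v) = 0"
  proof (rule sum.neutral, intro ballI)
    fix v assume v: "v \<in> {1..n}"
    show "eta v * chi i v = 0"
    proof (cases "v < j")
      case True then show ?thesis using eta0[of v] v by simp
    next
      case False then show ?thesis using ij unfolding chi_def by simp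
    qed
  qed
  have LHSj: "(\<Sum>v=1..n. eta v * chi j v) = 1"
  proof -
    have "(\<Sum>v=1..n. eta v * chi j v) = (\<Sum>v\<in>{j}. eta v * chi j v)"
    proof (rule sum.mono_neutral_cong_right)
      show "\<forall>v\<in>{1..n} - {j}. eta v * chi j v = 0"
      proof
        fix v assume v: "v \<in> {1..n} - {j}"
        show "eta v * chi j v = 0"
        proof (cases "v < j")
          case True then show ?thesis using eta0[of v] v by simp
        next
          case False then show ?thesis using v unfolding chi_def by simp
        qed
      qed
    qed (use j1 jn in auto)
    also have "\<dots> = 1" using etaj xs_props[OF j1 jn] unfolding chi_def by simp
    finally show ?thesis .
  qed
  have A: "uu j t * eP t = 1" using L3[OF j1 jn] t_def LHSj by simp
  have B: "uu i t * eP t = 0" using L3[OF i1 iN] eq t_def LHSi by simp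
  have "uu i t \<noteq> 0" using uu_nz[OF i1 iN] eq t_def by simp
  then have "eP t = 0" using B by simp
  then show False using A by simp
qed

end

lemma mult_entry:
  assumes "A \<in> carrier_mat n m" "B \<in> carrier_mat m p" "i < n" "j < p"
  shows "(A * B) $$ (i, j) = (\<Sum>k<m. A $$ (i, k) * B $$ (k, j))"
  using assms by (simp add: scalar_prod_def lessThan_atLeast0)

lemma upper_mult:
  fixes A B :: "'a :: semiring_0 mat"
  assumes A: "A \<in> carrier_mat n n" and B: "B \<in> carrier_mat n n"
    and uA: "upper_triangular A" and uB: "upper_triangular B"
  shows "upper_triangular (A * B)" "\<And>i. i < n \<Longrightarrow> (A * B) $$ (i, i) = A $$ (i, i) * B $$ (i, i)"
proof -
  show "upper_triangular (A * B)"
  proof (rule upper_triangularI)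
    fix i j assume ji: "j < i" and i: "i < dim_row (A * B)"
    then have i': "i < n" using A by simp
    have "(A * B) $$ (i, j) = (\<Sum>k<n. A $$ (i, k) * B $$ (k, j))" by (rule mult_entry[OF A B i']) (use ji i' in simp)
    also have "\<dots> = 0"
    proof (rule sum.neutral, intro ballI)
      fix k assume k: "k \<in> {..<n}"
      show "A $$ (i, k) * B $$ (k, j) = 0"
      proof (cases "k < i")
        case True then show ?thesis using upper_triangularD[OF uA True] A i' by simp
      next
        case False then have "j < k" using ji by simp
        then show ?thesis using upper_triangularD[OF uB \<open>j < k\<close>] B k by simp
      qed
    qed
    finally show "(A * B) $$ (i, j) = 0" .
  qed
  fix i assume i: "i < n"
  have "(A * B) $$ (i, i) = (\<Sum>k<n. A $$ (i, k) * B $$ (k, i))" by (rule mult_entry[OF A B i i])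
  also have "\<dots> = (\<Sum>k\<in>{i}. A $$ (i, k) * B $$ (k, i))"
  proof (rule sum.mono_neutral_cong_right)
    show "\<forall>k\<in>{..<n} - {i}. A $$ (i, k) * B $$ (k, i) = 0"
    proof
      fix k assume k: "k \<in> {..<n} - {i}"
      show "A $$ (i, k) * B $$ (k, i) = 0"
      proof (cases "k < i")
        case True then show ?thesis using upper_triangularD[OF uA True] A i by simp
      next
        case False then have "i < k" using k by simp
        then show ?thesis using upper_triangularD[OF uB \<open>i < k\<close>] B k by simp
      qed
    qed
  qed (use i in auto)
  finally show "(A * B) $$ (i, i) = A $$ (i, i) * B $$ (i, i)" by simp
qed

lemma upper_diag_nz:
  fixes U :: "'a :: field mat"
  assumes U: "U \<in> carrier_mat n n" and uU: "upper_triangular U"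
    and B: "B \<in> carrier_mat n n" and UB: "U * B = 1\<^sub>m n"
  shows "\<And>i. i < n \<Longrightarrow> U $$ (i, i) \<noteq> 0"
proof -
  fix i assume i: "i < n"
  have "det U * det B = 1" using det_mult[OF U B] UB by simp
  then have "det U \<noteq> 0" by auto
  then have "prod_list (diag_mat U) \<noteq> 0" using det_upper_triangular[OF uU U] by simp
  then have "0 \<notin> set (diag_mat U)" by (simp add: prod_list_zero_iff)
  then show "U $$ (i, i) \<noteq> 0" using i U unfolding diag_mat_def by auto
qed

lemma upper_inv:
  fixes U :: "'a :: field mat"
  assumes U: "U \<in> carrier_mat n n" and uU: "upper_triangular U"
    and B: "B \<in> carrier_mat n n" and UB: "U * B = 1\<^sub>m n"
  shows "upper_triangular B"
proof (rule upper_triangularI)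
  have nz: "\<And>i. i < n \<Longrightarrow> U $$ (i, i) \<noteq> 0" by (rule upper_diag_nz[OF U uU B UB])
  fix r s assume sr: "s < r" and r: "r < dim_row B"
  have "\<forall>r'. s < r' \<and> r' < n \<and> n - r' \<le> m \<longrightarrow> B $$ (r', s) = 0" for m
  proof (induction m)
    case 0 then show ?case by auto
  next
    case (Suc m)
    show ?case
    proof (intro allI impI)
      fix r' assume r': "s < r' \<and> r' < n \<and> n - r' \<le> Suc m"
      have "0 = (U * B) $$ (r', s)" using UB r' by simp
      also have "\<dots> = (\<Sum>k<n. U $$ (r', k) * B $$ (k, s))" by (rule mult_entry[OF U B]) (use r' in auto)
      also have "\<dots> = (\<Sum>k\<in>{r'}. U $$ (r', k) * B $$ (k, s))"
      proof (rule sum.mono_neutral_cong_right)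
        show "\<forall>k\<in>{..<n} - {r'}. U $$ (r', k) * B $$ (k, s) = 0"
        proof
          fix k assume k: "k \<in> {..<n} - {r'}"
          show "U $$ (r', k) * B $$ (k, s) = 0"
          proof (cases "k < r'")
            case True then show ?thesis using upper_triangularD[OF uU True] U r' by simp
          next
            case False then have "r' < k" using k by simp
            then have "B $$ (k, s) = 0" using Suc.IH k r' by auto
            then show ?thesis by simp
          qed
        qed
      qed (use r' in auto)
      finally have "U $$ (r', r') * B $$ (r', s) = 0" by simp
      then show "B $$ (r', s) = 0" using nz[of r'] r' by simp
    qed
  qed
  then show "B $$ (r, s) = 0" using sr r B by auto
qed

lemma invertible_mat_ex:
  fixes U :: "'a :: semiring_1 mat"
  assumes U: "U \<in> carrier_mat n n" and inv: "invertible_mat U"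
  obtains B where "B \<in> carrier_mat n n" "U * B = 1\<^sub>m n" "B * U = 1\<^sub>m n"
proof -
  from inv obtain B where "inverts_mat U B" "inverts_mat B U" unfolding invertible_mat_def by auto
  then have UB: "U * B = 1\<^sub>m n" and BU: "B * U = 1\<^sub>m (dim_row B)" using U unfolding inverts_mat_def by auto
  have "dim_col B = n" using arg_cong[OF UB, of dim_col] by simp
  moreover have "dim_row B = n" using arg_cong[OF BU, of dim_col] U by simp
  ultimately show ?thesis using that UB BU by auto
qed

lemma invertible_matI:
  fixes U :: "'a :: semiring_1 mat"
  assumes U: "U \<in> carrier_mat n n" and B: "B \<in> carrier_mat n n" and "U * B = 1\<^sub>m n" "B * U = 1\<^sub>m n"
  shows "invertible_mat U"
  unfolding invertible_mat_def inverts_mat_def using assms by auto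

lemma upper_nz_invertible:
  fixes U :: "'a :: field mat"
  assumes U: "U \<in> carrier_mat n n" and uU: "upper_triangular U" and nz: "\<And>i. i < n \<Longrightarrow> U $$ (i, i) \<noteq> 0"
  obtains B where "B \<in> carrier_mat n n" "U * B = 1\<^sub>m n" "B * U = 1\<^sub>m n"
proof -
  have "prod_list (diag_mat U) \<noteq> 0" using nz U unfolding diag_mat_def by (auto simp: prod_list_zero_iff)
  then have "det U \<noteq> 0" using det_upper_triangular[OF uU U] by simp
  then have "U \<in> Units (ring_mat TYPE('a) n undefined)" by (rule det_non_zero_imp_unit[OF U])
  then obtain B where "B \<in> carrier_mat n n" "B * U = 1\<^sub>m n" "U * B = 1\<^sub>m n"
    unfolding Units_def ring_mat_def by auto
  then show ?thesis using that by auto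
qed

lemma perm_le_id:
  fixes \<sigma> :: "nat \<Rightarrow> nat"
  assumes p: "\<sigma> permutes {1..n}" and le: "\<And>i. i \<in> {1..n} \<Longrightarrow> \<sigma> i \<le> i"
  shows "\<sigma> = id"
proof -
  have "\<sigma> i = i" for i
  proof (induction i rule: less_induct)
    case (less i)
    show ?case
    proof (cases "i \<in> {1..n}")
      case False then show ?thesis using p by (simp add: permutes_def)
    next
      case True
      have si: "\<sigma> i \<in> {1..n}" using permutes_in_image[OF p] True by blast
      show ?thesis
      proof (rule ccontr)
        assume ne: "\<sigma> i \<noteq> i"
        then have "\<sigma> i < i" using le[OF True] by simp
        then have "\<sigma> (\<sigma> i) = \<sigma> i" using less by simp
        then have "\<sigma> i = i" using permutes_inj[OF p] by (simp add: inj_eq)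
        then show False using ne by simp
      qed
    qed
  qed
  then show ?thesis by auto
qed

lemma sum_single:
  fixes g :: "nat \<Rightarrow> 'a :: comm_monoid_add"
  assumes "r < n" "\<And>k. k < n \<Longrightarrow> k \<noteq> r \<Longrightarrow> g k = 0"
  shows "(\<Sum>k<n. g k) = g r"
proof -
  have "(\<Sum>k<n. g k) = (\<Sum>k\<in>{r}. g k)"
    by (rule sum.mono_neutral_cong_right) (use assms in auto)
  then show ?thesis by simp
qed

lemma perm_matrix_carrier: "perm_matrix n p \<in> carrier_mat n n"
  unfolding perm_matrix_def by simp

lemma perm_matrix_entry: "r < n \<Longrightarrow> s < n \<Longrightarrow> perm_matrix n p $$ (r, s) = (if r + 1 = p (s + 1) then 1 else 0)"
  unfolding perm_matrix_def by simp

lemma bruhat_unique: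
  assumes P: "bruhat_perm n M p" and Q: "bruhat_perm n M q"
  shows "p = q"
proof -
  obtain U1 U2 where pp: "p permutes {1..n}" and U1: "U1 \<in> carrier_mat n n" and U2: "U2 \<in> carrier_mat n n"
    and uU1: "upper_triangular U1" and uU2: "upper_triangular U2" and iU1: "invertible_mat U1" and iU2: "invertible_mat U2"
    and M1: "M = U1 * perm_matrix n p * U2"
    using P unfolding bruhat_perm_def by blast
  obtain W1 W2 where qq: "q permutes {1..n}" and W1: "W1 \<in> carrier_mat n n" and W2: "W2 \<in> carrier_mat n n"
    and uW1: "upper_triangular W1" and uW2: "upper_triangular W2" and iW1: "invertible_mat W1" and iW2: "invertible_mat W2"
    and M2: "M = W1 * perm_matrix n q * W2"
    using Q unfolding bruhat_perm_def by blast
  obtain W1i where W1i: "W1i \<in> carrier_mat n n" "W1 * W1i = 1\<^sub>m n" "W1i * W1 = 1\<^sub>m n"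
    using invertible_mat_ex[OF W1 iW1] by blast
  obtain U2i where U2i: "U2i \<in> carrier_mat n n" "U2 * U2i = 1\<^sub>m n" "U2i * U2 = 1\<^sub>m n"
    using invertible_mat_ex[OF U2 iU2] by blast
  obtain U1i where U1i: "U1i \<in> carrier_mat n n" "U1 * U1i = 1\<^sub>m n" "U1i * U1 = 1\<^sub>m n"
    using invertible_mat_ex[OF U1 iU1] by blast
  have uW1i: "upper_triangular W1i" by (rule upper_inv[OF W1 uW1 W1i(1,2)])
  have uU2i: "upper_triangular U2i" by (rule upper_inv[OF U2 uU2 U2i(1,2)])
  have nzW1i: "\<And>i. i < n \<Longrightarrow> W1i $$ (i, i) \<noteq> 0" by (rule upper_diag_nz[OF W1i(1) uW1i W1 W1i(3)])
  have nzU1: "\<And>i. i < n \<Longrightarrow> U1 $$ (i, i) \<noteq> 0" by (rule upper_diag_nz[OF U1 uU1 U1i(1,2)])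
  define X where "X = W1i * U1"
  define Y where "Y = W2 * U2i"
  have X: "X \<in> carrier_mat n n" unfolding X_def using W1i U1 by simp
  have Y: "Y \<in> carrier_mat n n" unfolding Y_def using W2 U2i by simp
  have uY: "upper_triangular Y" unfolding Y_def by (rule upper_mult[OF W2 U2i(1) uW2 uU2i])
  have nzX: "X $$ (i, i) \<noteq> 0" if "i < n" for i
    unfolding X_def using upper_mult(2)[OF W1i(1) U1 uW1i uU1 that] nzW1i[OF that] nzU1[OF that] by simp
  have Pp: "perm_matrix n p \<in> carrier_mat n n" and Pq: "perm_matrix n q \<in> carrier_mat n n"
    by (rule perm_matrix_carrier)+
  have e1: "W1i * M * U2i = X * perm_matrix n p"
  proof -
    have "W1i * M * U2i = W1i * (U1 * perm_matrix n p * U2) * U2i" using M1 by simp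
    also have "\<dots> = (W1i * U1) * perm_matrix n p * (U2 * U2i)"
      using W1i(1) U1 U2 U2i(1) Pp by (simp add: assoc_mult_mat[of _ n n _ n _ n])
    also have "\<dots> = X * perm_matrix n p" using U2i(2) X_def Pp X by simp
    finally show ?thesis .
  qed
  have e2: "W1i * M * U2i = perm_matrix n q * Y"
  proof -
    have "W1i * M * U2i = W1i * (W1 * perm_matrix n q * W2) * U2i" using M2 by simp
    also have "\<dots> = (W1i * W1) * perm_matrix n q * (W2 * U2i)"
      using W1i(1) W1 W2 U2i(1) Pq by (simp add: assoc_mult_mat[of _ n n _ n _ n])
    also have "\<dots> = perm_matrix n q * Y" using W1i(3) Y_def Pq by simp
    finally show ?thesis .
  qed
  have XY: "X * perm_matrix n p = perm_matrix n q * Y" using e1 e2 by simp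
  define qi where "qi = Hilbert_Choice.inv q"
  have qi_q: "qi (q x) = x" for x unfolding qi_def using permutes_inverses(2)[OF qq] by simp
  have q_qi: "q (qi x) = x" for x unfolding qi_def using permutes_inverses(1)[OF qq] by simp
  have qi_perm: "qi permutes {1..n}" unfolding qi_def by (rule permutes_inv[OF qq])
  have le: "qi (p i) \<le> i" if i: "i \<in> {1..n}" for i
  proof -
    define s where "s = i - 1"
    have s: "s < n" "s + 1 = i" using i unfolding s_def by auto
    have pi: "p i \<in> {1..n}" using permutes_in_image[OF pp] i by blast
    define r where "r = p i - 1"
    have r: "r < n" "r + 1 = p i" using pi unfolding r_def by auto
    have qpi: "qi (p i) \<in> {1..n}" using permutes_in_image[OF qi_perm] pi by blast
    define k0 where "k0 = qi (p i) - 1"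
    have k0: "k0 < n" "k0 + 1 = qi (p i)" using qpi unfolding k0_def by auto
    have "(X * perm_matrix n p) $$ (r, s) = (\<Sum>k<n. X $$ (r, k) * perm_matrix n p $$ (k, s))"
      by (rule mult_entry[OF X Pp r(1) s(1)])
    also have "\<dots> = X $$ (r, r) * perm_matrix n p $$ (r, s)"
      by (rule sum_single[OF r(1)]) (use s r in \<open>auto simp: perm_matrix_entry\<close>)
    also have "\<dots> = X $$ (r, r)" using r s by (simp add: perm_matrix_entry)
    finally have a: "(X * perm_matrix n p) $$ (r, s) = X $$ (r, r)" .
    have "(perm_matrix n q * Y) $$ (r, s) = (\<Sum>k<n. perm_matrix n q $$ (r, k) * Y $$ (k, s))"
      by (rule mult_entry[OF Pq Y r(1) s(1)])
    also have "\<dots> = perm_matrix n q $$ (r, k0) * Y $$ (k0, s)"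
    proof (rule sum_single[OF k0(1)])
      fix k assume k: "k < n" "k \<noteq> k0"
      have "r + 1 \<noteq> q (k + 1)"
      proof
        assume "r + 1 = q (k + 1)"
        then have "qi (r + 1) = k + 1" using qi_q by metis
        then show False using k k0 r by simp
      qed
      then show "perm_matrix n q $$ (r, k) * Y $$ (k, s) = 0" using r k by (simp add: perm_matrix_entry)
    qed
    also have "\<dots> = Y $$ (k0, s)" using r k0 q_qi by (simp add: perm_matrix_entry)
    finally have b: "(perm_matrix n q * Y) $$ (r, s) = Y $$ (k0, s)" .
    have "Y $$ (k0, s) \<noteq> 0" using a b XY nzX[OF r(1)] by simp
    then have "\<not> s < k0" using upper_triangularD[OF uY, of s k0] k0 Y by auto
    then show ?thesis using k0 s by simp
  qed
  have "qi \<circ> p permutes {1..n}" by (rule permutes_compose[OF pp qi_perm])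
  then have "qi \<circ> p = id" by (rule perm_le_id) (use le in simp)
  then have "p x = q x" for x using q_qi[of "p x"] by (metis comp_apply id_apply)
  then show ?thesis by auto
qed

lemma sum_shift1: "(\<Sum>k<n. f (Suc k)) = (\<Sum>k=1..n. (f k :: 'a :: comm_monoid_add))"
  by (induction n) auto

context lnak begin

lemma hh_eq: "1 \<le> j \<Longrightarrow> j \<le> n \<Longrightarrow> hom_perm n c j = h0 j"
  by (rule hom_perm_h0)

lemma hh_perm: "hom_perm n c permutes {1..n}"
proof (rule bij_imp_permutes)
  have inj: "inj_on (hom_perm n c) {1..n}"
  proof (rule inj_onI)
    fix i j assume i: "i \<in> {1..n}" and j: "j \<in> {1..n}" and e: "hom_perm n c i = hom_perm n c j"
    then have e': "h0 i = h0 j" using hh_eq by auto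
    show "i = j"
    proof (rule ccontr)
      assume "i \<noteq> j"
      then consider "i < j" | "j < i" by linarith
      then show False
      proof cases
        case 1 then show False using h0_inj[of i j] i j e' by auto
      next
        case 2 then show False using h0_inj[of j i] i j e' by auto
      qed
    qed
  qed
  have sub: "hom_perm n c ` {1..n} \<subseteq> {1..n}" using hh_eq h0_range by auto
  have "hom_perm n c ` {1..n} = {1..n}" by (rule endo_inj_surj[OF _ sub inj]) simp
  then show "bij_betw (hom_perm n c) {1..n} {1..n}" using inj unfolding bij_betw_def by simp
  show "\<And>x. x \<notin> {1..n} \<Longrightarrow> hom_perm n c x = x" unfolding hom_perm_def by auto
qed

definition hinv where "hinv = Hilbert_Choice.inv (hom_perm n c)"

lemma hinv_props:
  "hom_perm n c (hinv x) = x" "hinv (hom_perm n c x) = x" "x \<in> {1..n} \<Longrightarrow> hinv x \<in> {1..n}"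
proof -
  show "hom_perm n c (hinv x) = x" unfolding hinv_def using permutes_inverses(1)[OF hh_perm] by simp
  show "hinv (hom_perm n c x) = x" unfolding hinv_def using permutes_inverses(2)[OF hh_perm] by simp
  show "x \<in> {1..n} \<Longrightarrow> hinv x \<in> {1..n}"
    unfolding hinv_def using permutes_in_image[OF permutes_inv[OF hh_perm]] by blast
qed

definition Am :: "rat mat" where "Am = mat n n (\<lambda>(r, s). uu (s + 1) (r + 1))"
definition Vm :: "rat mat" where "Vm = mat n n (\<lambda>(r, s). chi (s + 1) (r + 1))"
definition Tm :: "rat mat" where "Tm = mat n n (\<lambda>(r, s). uu (hinv (s + 1)) (r + 1))"

abbreviation Cm where "Cm \<equiv> cartan n c"
abbreviation Ph where "Ph \<equiv> perm_matrix n (hom_perm n c)"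

lemma Cm_carrier: "Cm \<in> carrier_mat n n" unfolding cartan_def by simp
lemma Am_carrier: "Am \<in> carrier_mat n n" unfolding Am_def by simp
lemma Vm_carrier: "Vm \<in> carrier_mat n n" unfolding Vm_def by simp
lemma Tm_carrier: "Tm \<in> carrier_mat n n" unfolding Tm_def by simp

lemma Cm_entry: "r < n \<Longrightarrow> s < n \<Longrightarrow> Cm $$ (r, s) = Phi (r + 1) (s + 1)"
  unfolding cartan_def Phi_def by (simp add: Let_def)

lemma CA_V: "Cm * Am = Vm"
proof (rule eq_matI)
  fix r s assume r: "r < dim_row Vm" and s: "s < dim_col Vm"
  then have r': "r < n" and s': "s < n" unfolding Vm_def by auto
  have "(Cm * Am) $$ (r, s) = (\<Sum>k<n. Cm $$ (r, k) * Am $$ (k, s))"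
    by (rule mult_entry[OF Cm_carrier Am_carrier r' s'])
  also have "\<dots> = (\<Sum>k<n. Phi (r + 1) (Suc k) * uu (s + 1) (Suc k))"
    by (rule sum.cong) (use r' s' in \<open>auto simp: Cm_entry Am_def\<close>)
  also have "\<dots> = (\<Sum>k=1..n. Phi (r + 1) k * uu (s + 1) k)" by (rule sum_shift1)
  also have "\<dots> = chi (s + 1) (r + 1)" by (rule fact1_j) (use s' in auto)
  also have "\<dots> = Vm $$ (r, s)" unfolding Vm_def using r' s' by simp
  finally show "(Cm * Am) $$ (r, s) = Vm $$ (r, s)" .
qed (use Cm_carrier Am_carrier Vm_carrier in auto)

lemma TP_A: "Tm * Ph = Am"
proof (rule eq_matI)
  fix r s assume r: "r < dim_row Am" and s: "s < dim_col Am"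
  then have r': "r < n" and s': "s < n" unfolding Am_def by auto
  define k0 where "k0 = hom_perm n c (s + 1) - 1"
  have hs: "hom_perm n c (s + 1) \<in> {1..n}" using permutes_in_image[OF hh_perm] s' by auto
  then have k0: "k0 < n" "k0 + 1 = hom_perm n c (s + 1)" unfolding k0_def by auto
  have "(Tm * Ph) $$ (r, s) = (\<Sum>k<n. Tm $$ (r, k) * Ph $$ (k, s))"
    by (rule mult_entry[OF Tm_carrier perm_matrix_carrier r' s'])
  also have "\<dots> = Tm $$ (r, k0) * Ph $$ (k0, s)"
    by (rule sum_single[OF k0(1)]) (use s' k0 in \<open>auto simp: perm_matrix_entry\<close>)
  also have "\<dots> = uu (hinv (k0 + 1)) (r + 1)" using r' s' k0 by (simp add: perm_matrix_entry Tm_def)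
  also have "\<dots> = uu (s + 1) (r + 1)" using k0(2) hinv_props(2) by simp
  also have "\<dots> = Am $$ (r, s)" unfolding Am_def using r' s' by simp
  finally show "(Tm * Ph) $$ (r, s) = Am $$ (r, s)" .
qed (use Tm_carrier perm_matrix_carrier Am_carrier in auto)

lemma Tm_upper: "upper_triangular Tm"
proof (rule upper_triangularI)
  fix r s assume sr: "s < r" and r: "r < dim_row Tm"
  then have r': "r < n" and s': "s < n" unfolding Tm_def by auto
  define j where "j = hinv (s + 1)"
  have j: "j \<in> {1..n}" unfolding j_def using hinv_props(3) s' by simp
  have "h0 j = s + 1" using hh_eq[of j] j hinv_props(1) unfolding j_def by simp
  then have "uu j (r + 1) = 0" using uu_zero[of j "r + 1"] j sr by simp
  then show "Tm $$ (r, s) = 0" unfolding Tm_def j_def using r' s' by simp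
qed

lemma Tm_diag: "i < n \<Longrightarrow> Tm $$ (i, i) \<noteq> 0"
proof -
  assume i: "i < n"
  define j where "j = hinv (i + 1)"
  have j: "j \<in> {1..n}" unfolding j_def using hinv_props(3) i by simp
  have "h0 j = i + 1" using hh_eq[of j] j hinv_props(1) unfolding j_def by simp
  then have "uu j (i + 1) \<noteq> 0" using uu_nz[of j] j by auto
  then show ?thesis unfolding Tm_def j_def using i by simp
qed

lemma Vm_upper: "upper_triangular Vm"
  by (rule upper_triangularI) (auto simp: Vm_def chi_def)

lemma Vm_diag: "i < n \<Longrightarrow> Vm $$ (i, i) \<noteq> 0"
  unfolding Vm_def chi_def using xs_props(3)[of "i + 1"] by simp

lemma CmT_upper: "upper_triangular (transpose_mat Cm)"
  by (rule upper_triangularI) (auto simp: cartan_def Let_def)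

lemma CmT_diag: "i < n \<Longrightarrow> transpose_mat Cm $$ (i, i) = 1"
  using pe_ge[of "i + 1"] by (simp add: cartan_def Let_def)

lemma bruhat_exists: "bruhat_perm n (coxeter n c) (hom_perm n c)"
proof -
  obtain Vi where Vi: "Vi \<in> carrier_mat n n" "Vm * Vi = 1\<^sub>m n" "Vi * Vm = 1\<^sub>m n"
    using upper_nz_invertible[OF Vm_carrier Vm_upper Vm_diag] by blast
  have uVi: "upper_triangular Vi" by (rule upper_inv[OF Vm_carrier Vm_upper Vi(1,2)])
  define B where "B = Am * Vi"
  have B: "B \<in> carrier_mat n n" unfolding B_def using Am_carrier Vi by simp
  have CB: "Cm * B = 1\<^sub>m n"
  proof -
    have "Cm * B = (Cm * Am) * Vi" unfolding B_def using Cm_carrier Am_carrier Vi(1) by simp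
    then show ?thesis using CA_V Vi(2) by simp
  qed
  have BC: "B * Cm = 1\<^sub>m n" by (rule mat_mult_left_right_inverse[OF Cm_carrier B CB])
  have minv: "mat_inv n Cm = B"
    unfolding mat_inv_def
  proof (rule the_equality)
    show "B \<in> carrier_mat n n \<and> inverts_mat Cm B \<and> inverts_mat B Cm"
      using B CB BC Cm_carrier unfolding inverts_mat_def by simp
    fix B' assume "B' \<in> carrier_mat n n \<and> inverts_mat Cm B' \<and> inverts_mat B' Cm"
    then have B': "B' \<in> carrier_mat n n" "B' * Cm = 1\<^sub>m n" unfolding inverts_mat_def by auto
    have "B' = B' * (Cm * B)" using CB B' by simp
    also have "\<dots> = (B' * Cm) * B" by (rule assoc_mult_mat[symmetric, OF B'(1) Cm_carrier B])
    also have "\<dots> = B" using B'(2) B by simp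
    finally show "B' = B" .
  qed
  define U1 where "U1 = - (transpose_mat Cm * Tm)"
  have U1: "U1 \<in> carrier_mat n n" unfolding U1_def using Cm_carrier Tm_carrier by simp
  have TT: "transpose_mat Cm \<in> carrier_mat n n" using Cm_carrier by simp
  have uP: "upper_triangular (transpose_mat Cm * Tm)" by (rule upper_mult(1)[OF TT Tm_carrier CmT_upper Tm_upper])
  have uU1: "upper_triangular U1"
    unfolding U1_def using uP Cm_carrier Tm_carrier by (auto simp: upper_triangular_def)
  have dU1: "U1 $$ (i, i) \<noteq> 0" if "i < n" for i
    unfolding U1_def using upper_mult(2)[OF TT Tm_carrier CmT_upper Tm_upper that] CmT_diag[OF that] Tm_diag[OF that] that TT Tm_carrier
    by simp
  obtain U1i where U1i: "U1i \<in> carrier_mat n n" "U1 * U1i = 1\<^sub>m n" "U1i * U1 = 1\<^sub>m n"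
    using upper_nz_invertible[OF U1 uU1 dU1] by blast
  have iU1: "invertible_mat U1" by (rule invertible_matI[OF U1 U1i])
  have iVi: "invertible_mat Vi" by (rule invertible_matI[OF Vi(1) Vm_carrier Vi(3) Vi(2)])
  have cox: "coxeter n c = U1 * Ph * Vi"
  proof -
    have "coxeter n c = - (transpose_mat Cm * B)" unfolding coxeter_def minv ..
    also have "\<dots> = - (transpose_mat Cm * ((Tm * Ph) * Vi))" unfolding B_def TP_A ..
    also have "\<dots> = U1 * Ph * Vi"
      unfolding U1_def using TT Tm_carrier perm_matrix_carrier[of n "hom_perm n c"] Vi(1)
      by (simp add: assoc_mult_mat[of _ n n _ n _ n])
    finally show ?thesis .
  qed
  show ?thesis unfolding bruhat_perm_def
    using hh_perm U1 Vi(1) uU1 uVi iU1 iVi cox by blast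
qed

lemma coxeter_perm_eq: "coxeter_perm n c = hom_perm n c"
  unfolding coxeter_perm_def
proof (rule the_equality[where P = "bruhat_perm n (coxeter n c)"])
  show "bruhat_perm n (coxeter n c) (hom_perm n c)" by (rule bruhat_exists)
  fix p assume "bruhat_perm n (coxeter n c) p"
  then show "p = hom_perm n c" by (rule bruhat_unique[OF _ bruhat_exists])
qed

end

theorem mainTheorem4:
  fixes n :: nat and c :: "nat \<Rightarrow> nat"
  assumes "linear_nakayama n c"
  shows "coxeter_perm n c = hom_perm n c"
proof -
  interpret lnak n c by (rule lnak.intro[OF assms])
  show ?thesis by (rule coxeter_perm_eq)
qed

end
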